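(* Let $f:\mathbb{R}^d\times\mathcal{Z}\to\mathbb{R}$ be such that for every $z$, $f(\cdot,z)$ is non-negative, convex and $\beta$-smooth, let $S=(z_1,\dots,z_n)$, and suppose there is $w^\star\in\mathbb{R}^d$ that is a $\rho$-flat minimum of $f(\cdot,z_i)$ for every $i$ (so $F_S(w^\star+v)=0$ for all $\|v\|\le\rho$). Let $0<\eta\le \frac{1}{4\beta}$, $r>0$, $w_1\in\mathbb{R}^d$, and let $\{w_t\}_{t=1}^{T}$ satisfy $w_{t+1}=w_t-\eta\nabla F_S(w_t+v_t)$ where $\{v_t\}_{t=1}^T$ are arbitrary vectors with $\|v_t\|\le r$. Then $$\frac1T\sum_{t=1}^T F_S(w_t+v_t)-F_S(w^\star)\le \frac{\|w_1-w^\star\|^2}{\eta T}+4\beta\max\{r-\rho,0\}^2.$$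
   Context: Norms are Euclidean. $F_S(w)=\frac1n\sum_{i=1}^n f(w,z_i)$. A function is $\beta$-smooth if its gradient is $\beta$-Lipschitz. For $\rho\ge0$, a point $w^\star$ is a $\rho$-flat minimum of a non-negative function $g$ if $g(w)=0$ for every $w$ with $\|w-w^\star\|\le\rho$. *)

theory Defs
  imports "HOL-Analysis.Analysis"
begin

definition grad :: "('a::euclidean_space \<Rightarrow> real) \<Rightarrow> 'a \<Rightarrow> 'a" where
  "grad F x = (SOME g. (F has_derivative (\<lambda>h. g \<bullet> h)) (at x))"

definition smooth_fun :: "real \<Rightarrow> ('a::euclidean_space \<Rightarrow> real) \<Rightarrow> bool" where
  "smooth_fun \<beta> F \<longleftrightarrow> (\<forall>x. F differentiable (at x)) \<and>
     (\<forall>x y. norm (grad F x - grad F y) \<le> \<beta> * norm (x - y))"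

definition emp_risk :: "('a \<Rightarrow> 'z \<Rightarrow> real) \<Rightarrow> nat \<Rightarrow> (nat \<Rightarrow> 'z) \<Rightarrow> 'a \<Rightarrow> real" where
  "emp_risk f n S w = (1 / real n) * (\<Sum>i<n. f w (S i))"

definition flat_min :: "real \<Rightarrow> ('a::real_normed_vector \<Rightarrow> real) \<Rightarrow> 'a \<Rightarrow> bool" where
  "flat_min \<rho> g w0 \<longleftrightarrow> (\<forall>w. norm (w - w0) \<le> \<rho> \<longrightarrow> g w = 0)"

end

theory Submission imports Defs begin
lemma grad_exists:
  fixes F :: "'a::euclidean_space \<Rightarrow> real"
  assumes "F differentiable (at x)"
  shows "\<exists>g. (F has_derivative (\<lambda>h. g \<bullet> h)) (at x)"
proof -
  obtain D where D: "(F has_derivative D) (at x)" using assms differentiable_def by blast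
  have lin: "linear D" using D has_derivative_linear by blast
  have "D = (\<lambda>h. adjoint D 1 \<bullet> h)"
  proof
    fix h
    have "h \<bullet> adjoint D 1 = D h \<bullet> 1" using adjoint_works[OF lin] by blast
    then show "D h = adjoint D 1 \<bullet> h" by (simp add: inner_commute)
  qed
  then show ?thesis using D by metis
qed

lemma grad_unique:
  fixes F :: "'a::euclidean_space \<Rightarrow> real"
  assumes "(F has_derivative (\<lambda>h. g \<bullet> h)) (at x)"
  shows "grad F x = g"
proof -
  have "(F has_derivative (\<lambda>h. grad F x \<bullet> h)) (at x)"
    unfolding grad_def using someI[where P="\<lambda>g. (F has_derivative (\<lambda>h. g \<bullet> h)) (at x)"] assms by blast
  then have "(\<lambda>h. grad F x \<bullet> h) = (\<lambda>h. g \<bullet> h)" using has_derivative_unique assms by blast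
  then have "grad F x \<bullet> (grad F x - g) = g \<bullet> (grad F x - g)" by metis
  then have "(grad F x - g) \<bullet> (grad F x - g) = 0" by (simp add: inner_diff_left)
  then show ?thesis by simp
qed

lemma grad_works:
  fixes F :: "'a::euclidean_space \<Rightarrow> real"
  assumes "F differentiable (at x)"
  shows "(F has_derivative (\<lambda>h. grad F x \<bullet> h)) (at x)"
  using grad_exists[OF assms] grad_unique by metis

lemma line_deriv:
  fixes F :: "'a::euclidean_space \<Rightarrow> real"
  assumes "\<forall>x. F differentiable (at x)"
  shows "((\<lambda>s. F (x + s *\<^sub>R d)) has_real_derivative (grad F (x + s *\<^sub>R d) \<bullet> d)) (at s within A)"
proof -
  have 1: "((\<lambda>s. x + s *\<^sub>R d) has_derivative (\<lambda>t. t *\<^sub>R d)) (at s within A)"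
    by (auto intro!: derivative_eq_intros)
  have 2: "(F has_derivative (\<lambda>h. grad F (x + s *\<^sub>R d) \<bullet> h)) (at (x + s *\<^sub>R d))"
    using grad_works assms by blast
  have "((\<lambda>s. F (x + s *\<^sub>R d)) has_derivative (\<lambda>t. grad F (x + s *\<^sub>R d) \<bullet> (t *\<^sub>R d))) (at s within A)"
    using has_derivative_compose[OF 1 2] by (simp add: o_def)
  moreover have "(\<lambda>t. grad F (x + s *\<^sub>R d) \<bullet> (t *\<^sub>R d)) = (*) (grad F (x + s *\<^sub>R d) \<bullet> d)"
    by (auto simp: mult.commute)
  ultimately show ?thesis by (simp add: has_field_derivative_def)
qed

lemma tangent:
  fixes F :: "'a::euclidean_space \<Rightarrow> real"
  assumes cv: "convex_on UNIV F" and d: "\<forall>x. F differentiable (at x)"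
  shows "F y \<ge> F x + grad F x \<bullet> (y - x)"
proof -
  define \<phi> where "\<phi> = (\<lambda>s. F (x + s *\<^sub>R (y - x)))"
  have c: "convex_on UNIV \<phi>"
  proof (rule convex_onI)
    fix t u v :: real assume t: "0 < t" "t < 1"
    have "x + ((1 - t) * u + t * v) *\<^sub>R (y - x) = (1 - t) *\<^sub>R (x + u *\<^sub>R (y - x)) + t *\<^sub>R (x + v *\<^sub>R (y - x))"
      by (simp add: algebra_simps)
    then show "\<phi> ((1 - t) *\<^sub>R u + t *\<^sub>R v) \<le> (1 - t) * \<phi> u + t * \<phi> v"
      unfolding \<phi>_def using convex_onD[OF cv, of t] t by simp
  qed auto
  have "\<phi> 1 - \<phi> 0 \<ge> (grad F x \<bullet> (y - x)) * (1 - 0)"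
    apply (rule convex_on_imp_above_tangent[OF c])
    using line_deriv[OF d, of x "y - x" 0 UNIV] by (auto simp: \<phi>_def)
  then show ?thesis by (simp add: \<phi>_def)
qed
lemma descent:
  fixes F :: "'a::euclidean_space \<Rightarrow> real"
  assumes sm: "smooth_fun \<beta> F"
  shows "F y \<le> F x + grad F x \<bullet> (y - x) + \<beta> / 2 * (norm (y - x))\<^sup>2"
proof -
  define d where "d = y - x"
  define G where "G = grad F x"
  have dif: "\<forall>x. F differentiable (at x)" and lip: "\<And>a b. norm (grad F a - grad F b) \<le> \<beta> * norm (a - b)"
    using sm unfolding smooth_fun_def by auto
  define \<phi> where "\<phi> = (\<lambda>s. F (x + s *\<^sub>R d) - s * (G \<bullet> d) - \<beta> / 2 * s\<^sup>2 * (norm d)\<^sup>2)"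
  have "\<phi> 0 \<ge> \<phi> 1"
  proof (rule DERIV_nonpos_imp_nonincreasing[of 0 1 \<phi>])
    fix s :: real assume s: "0 \<le> s" "s \<le> 1"
    have D: "(\<phi> has_real_derivative (grad F (x + s *\<^sub>R d) \<bullet> d - G \<bullet> d - \<beta> * s * (norm d)\<^sup>2)) (at s)"
      unfolding \<phi>_def
      using line_deriv[OF dif, of x d s UNIV]
      by (auto intro!: derivative_eq_intros simp: power2_eq_square)
    have "grad F (x + s *\<^sub>R d) \<bullet> d - G \<bullet> d = (grad F (x + s *\<^sub>R d) - G) \<bullet> d"
      by (simp add: inner_diff_left)
    also have "\<dots> \<le> norm (grad F (x + s *\<^sub>R d) - G) * norm d"
      by (rule norm_cauchy_schwarz)
    also have "\<dots> \<le> (\<beta> * norm (s *\<^sub>R d)) * norm d"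
      using lip[of "x + s *\<^sub>R d" x] unfolding G_def by (simp add: mult_right_mono)
    also have "\<dots> = \<beta> * s * (norm d)\<^sup>2" using s by (simp add: power2_eq_square)
    finally have "grad F (x + s *\<^sub>R d) \<bullet> d - G \<bullet> d \<le> \<beta> * s * (norm d)\<^sup>2" .
    then have "grad F (x + s *\<^sub>R d) \<bullet> d - G \<bullet> d - \<beta> * s * (norm d)\<^sup>2 \<le> 0" by linarith
    with D show "\<exists>y. (\<phi> has_real_derivative y) (at s) \<and> y \<le> 0" by blast
  qed simp
  then show ?thesis unfolding \<phi>_def d_def G_def by simp
qed

lemma grad_sq:
  fixes F :: "'a::euclidean_space \<Rightarrow> real"
  assumes sm: "smooth_fun \<beta> F" and b: "\<beta> > 0" and nn: "\<And>x. F x \<ge> 0"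
  shows "(norm (grad F x))\<^sup>2 \<le> 2 * \<beta> * F x"
proof -
  define G where "G = grad F x"
  have "0 \<le> F (x - (1/\<beta>) *\<^sub>R G)" by (rule nn)
  also have "\<dots> \<le> F x + G \<bullet> (- (1/\<beta>) *\<^sub>R G) + \<beta> / 2 * (norm (- (1/\<beta>) *\<^sub>R G))\<^sup>2"
    using descent[OF sm, of "x - (1/\<beta>) *\<^sub>R G" x] unfolding G_def by simp
  also have "\<dots> = F x - (norm G)\<^sup>2 / (2 * \<beta>)"
    using b by (simp add: power2_eq_square power_mult_distrib field_simps inner_commute dot_square_norm flip: power2_norm_eq_inner)
  finally show ?thesis using b unfolding G_def by (simp add: field_simps)
qed
lemma step_ineq:
  fixes F :: "'a::euclidean_space \<Rightarrow> real"
  assumes tan: "\<And>x y. F y \<ge> F x + grad F x \<bullet> (y - x)"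
    and gsq: "\<And>x. (norm (grad F x))\<^sup>2 \<le> 2 * \<beta> * F x"
    and zero: "\<And>z. norm z \<le> \<rho> \<Longrightarrow> F (wstar + z) = 0"
    and b: "\<beta> > 0" and ep: "\<eta> > 0" and el: "\<eta> \<le> 1 / (4 * \<beta>)" and rho: "\<rho> \<ge> 0"
    and vr: "norm v \<le> r"
  shows "(norm (w - \<eta> *\<^sub>R grad F (w + v) - wstar))\<^sup>2
          \<le> (norm (w - wstar))\<^sup>2 - \<eta> * F (w + v) + 4 * \<beta> * \<eta> * (max (r - \<rho>) 0)\<^sup>2"
proof -
  define G where "G = grad F (w + v)"
  define \<delta> where "\<delta> = max (r - \<rho>) 0"
  define N where "N = norm G"
  define Fu where "Fu = F (w + v)"
  obtain z where z: "norm z \<le> \<rho>" "norm (v - z) \<le> \<delta>"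
  proof (cases "norm v \<le> \<rho>")
    case True
    then show ?thesis using that[of v] by (simp add: \<delta>_def)
  next
    case False
    then have nv: "norm v > 0" using rho by linarith
    have "norm ((\<rho> / norm v) *\<^sub>R v) = \<rho>" using nv rho by simp
    moreover have "v - (\<rho> / norm v) *\<^sub>R v = (1 - \<rho> / norm v) *\<^sub>R v" by (simp add: algebra_simps)
    moreover have "norm ((1 - \<rho> / norm v) *\<^sub>R v) = norm v - \<rho>"
      using nv False by (simp add: field_simps)
    ultimately show ?thesis using that[of "(\<rho> / norm v) *\<^sub>R v"] vr unfolding \<delta>_def by force
  qed
  have "F (wstar + z) \<ge> Fu + G \<bullet> (wstar + z - (w + v))" using tan unfolding G_def Fu_def by blast
  then have "0 \<ge> Fu + G \<bullet> (wstar + z - (w + v))" using zero z by simp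
  moreover have "G \<bullet> (wstar + z - (w + v)) = - (G \<bullet> (w - wstar)) - G \<bullet> (v - z)"
    by (simp add: inner_diff_right inner_add_right)
  moreover have "G \<bullet> (v - z) \<le> N * \<delta>"
    using norm_cauchy_schwarz[of G "v - z"] z(2) mult_left_mono[OF z(2), of N] unfolding N_def by simp
  ultimately have A: "G \<bullet> (w - wstar) \<ge> Fu - N * \<delta>" by linarith
  have E: "(norm (w - \<eta> *\<^sub>R G - wstar))\<^sup>2 = (norm (w - wstar))\<^sup>2 - 2 * \<eta> * (G \<bullet> (w - wstar)) + \<eta>\<^sup>2 * N\<^sup>2"
  proof -
    have "w - \<eta> *\<^sub>R G - wstar = (w - wstar) - \<eta> *\<^sub>R G" by simp
    then show ?thesis unfolding N_def
      by (simp only: power2_norm_eq_inner) (simp add: inner_diff_left inner_diff_right inner_commute power2_eq_square algebra_simps)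
  qed
  have gs: "N\<^sup>2 \<le> 2 * \<beta> * Fu" using gsq unfolding N_def G_def Fu_def by blast
  have q: "2 * N * \<delta> \<le> N\<^sup>2 / (4 * \<beta>) + 4 * \<beta> * \<delta>\<^sup>2"
  proof -
    have "0 \<le> (N - 4 * \<beta> * \<delta>)\<^sup>2" by simp
    then have "8 * \<beta> * N * \<delta> \<le> N\<^sup>2 + 16 * \<beta>\<^sup>2 * \<delta>\<^sup>2" by (simp add: power2_eq_square algebra_simps)
    then show ?thesis using b by (simp add: field_simps power2_eq_square)
  qed
  have e2: "\<eta> * N\<^sup>2 \<le> N\<^sup>2 / (4 * \<beta>)"
    using mult_right_mono[OF el, of "N\<^sup>2"] by simp
  have e3: "N\<^sup>2 / (4 * \<beta>) \<le> Fu / 2" using gs b by (simp add: field_simps)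
  have key: "- 2 * (G \<bullet> (w - wstar)) + \<eta> * N\<^sup>2 \<le> - Fu + 4 * \<beta> * \<delta>\<^sup>2"
    using A q e2 e3 by linarith
  have "- 2 * \<eta> * (G \<bullet> (w - wstar)) + \<eta>\<^sup>2 * N\<^sup>2 = \<eta> * (- 2 * (G \<bullet> (w - wstar)) + \<eta> * N\<^sup>2)"
    by (simp add: power2_eq_square algebra_simps)
  also have "\<dots> \<le> \<eta> * (- Fu + 4 * \<beta> * \<delta>\<^sup>2)" using key ep by (simp add: mult_left_mono)
  finally show ?thesis using E unfolding G_def[symmetric] Fu_def[symmetric] \<delta>_def[symmetric]
    by (simp add: algebra_simps)
qed
lemma emp_deriv:
  fixes f :: "'a::euclidean_space \<Rightarrow> 'z \<Rightarrow> real"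
  assumes sm: "\<And>z. smooth_fun \<beta> (\<lambda>x. f x z)"
  shows "(emp_risk f n S has_derivative
           (\<lambda>h. ((1 / real n) *\<^sub>R (\<Sum>i<n. grad (\<lambda>x. f x (S i)) x)) \<bullet> h)) (at x)"
proof -
  have d: "\<And>i. ((\<lambda>x. f x (S i)) has_derivative (\<lambda>h. grad (\<lambda>x. f x (S i)) x \<bullet> h)) (at x)"
    using grad_works sm unfolding smooth_fun_def by blast
  have "((\<lambda>w. \<Sum>i<n. f w (S i)) has_derivative (\<lambda>h. \<Sum>i<n. grad (\<lambda>x. f x (S i)) x \<bullet> h)) (at x)"
    by (rule has_derivative_sum) (use d in blast)
  then have "((\<lambda>w. (1 / real n) * (\<Sum>i<n. f w (S i))) has_derivative
       (\<lambda>h. (1 / real n) * (\<Sum>i<n. grad (\<lambda>x. f x (S i)) x \<bullet> h))) (at x)"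
    by (rule has_derivative_mult_right)
  moreover have "(\<lambda>h. (1 / real n) * (\<Sum>i<n. grad (\<lambda>x. f x (S i)) x \<bullet> h))
      = (\<lambda>h. ((1 / real n) *\<^sub>R (\<Sum>i<n. grad (\<lambda>x. f x (S i)) x)) \<bullet> h)"
    by (simp add: inner_sum_left)
  ultimately show ?thesis unfolding emp_risk_def[abs_def] by simp
qed

lemma emp_grad:
  fixes f :: "'a::euclidean_space \<Rightarrow> 'z \<Rightarrow> real"
  assumes sm: "\<And>z. smooth_fun \<beta> (\<lambda>x. f x z)"
  shows "grad (emp_risk f n S) x = (1 / real n) *\<^sub>R (\<Sum>i<n. grad (\<lambda>x. f x (S i)) x)"
  using grad_unique[OF emp_deriv[where f=f, OF sm]] .

lemma emp_smooth:
  fixes f :: "'a::euclidean_space \<Rightarrow> 'z \<Rightarrow> real"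
  assumes sm: "\<And>z. smooth_fun \<beta> (\<lambda>x. f x z)" and n: "n > 0"
  shows "smooth_fun \<beta> (emp_risk f n S)"
  unfolding smooth_fun_def
proof (intro conjI allI)
  fix x show "emp_risk f n S differentiable at x"
    using emp_deriv[where f=f, OF sm] differentiable_def by blast
next
  fix x y :: 'a
  have "grad (emp_risk f n S) x - grad (emp_risk f n S) y
      = (1 / real n) *\<^sub>R (\<Sum>i<n. grad (\<lambda>x. f x (S i)) x - grad (\<lambda>x. f x (S i)) y)"
    by (simp add: emp_grad[where f=f, OF sm] sum_subtractf scaleR_diff_right)
  also have "norm \<dots> \<le> (1 / real n) * (\<Sum>i<n. norm (grad (\<lambda>x. f x (S i)) x - grad (\<lambda>x. f x (S i)) y))"
    by (simp add: divide_right_mono norm_sum)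
  also have "\<dots> \<le> (1 / real n) * (\<Sum>i<n. \<beta> * norm (x - y))"
    by (intro mult_left_mono sum_mono) (use sm in \<open>auto simp: smooth_fun_def\<close>)
  also have "\<dots> = \<beta> * norm (x - y)" using n by simp
  finally show "norm (grad (emp_risk f n S) x - grad (emp_risk f n S) y) \<le> \<beta> * norm (x - y)" .
qed

lemma emp_tangent:
  fixes f :: "'a::euclidean_space \<Rightarrow> 'z \<Rightarrow> real"
  assumes sm: "\<And>z. smooth_fun \<beta> (\<lambda>x. f x z)" and cv: "\<And>z. convex_on UNIV (\<lambda>x. f x z)"
  shows "emp_risk f n S y \<ge> emp_risk f n S x + grad (emp_risk f n S) x \<bullet> (y - x)"
proof -
  have t: "\<And>i. f y (S i) \<ge> f x (S i) + grad (\<lambda>x. f x (S i)) x \<bullet> (y - x)"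
    using tangent cv sm unfolding smooth_fun_def by blast
  have "(\<Sum>i<n. f x (S i) + grad (\<lambda>x. f x (S i)) x \<bullet> (y - x)) \<le> (\<Sum>i<n. f y (S i))"
    by (rule sum_mono) (use t in blast)
  then have "(1 / real n) * (\<Sum>i<n. f x (S i) + grad (\<lambda>x. f x (S i)) x \<bullet> (y - x)) \<le> (1 / real n) * (\<Sum>i<n. f y (S i))"
    by (simp add: divide_right_mono)
  then show ?thesis
    by (simp add: emp_grad[where f=f, OF sm] emp_risk_def sum.distrib inner_sum_left distrib_left)
qed
theorem mainTheorem2:
  fixes f :: "'a::euclidean_space \<Rightarrow> 'z \<Rightarrow> real"
    and S :: "nat \<Rightarrow> 'z" and n :: nat
    and \<beta> \<rho> \<eta> r :: real and wstar :: 'a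
    and w v :: "nat \<Rightarrow> 'a" and T :: nat
  assumes nonneg: "\<And>x z. f x z \<ge> 0"
    and convex: "\<And>z. convex_on UNIV (\<lambda>x. f x z)"
    and smooth: "\<And>z. smooth_fun \<beta> (\<lambda>x. f x z)"
    and rho: "\<rho> \<ge> 0"
    and flat: "\<And>i. i < n \<Longrightarrow> flat_min \<rho> (\<lambda>x. f x (S i)) wstar"
    and eta_pos: "0 < \<eta>" and eta_le: "\<eta> \<le> 1 / (4 * \<beta>)"
    and r_pos: "r > 0"
    and T_pos: "T \<ge> 1"
    and step: "\<And>t. 1 \<le> t \<Longrightarrow> t < T \<Longrightarrow>
                 w (Suc t) = w t - \<eta> *\<^sub>R grad (emp_risk f n S) (w t + v t)"
    and v_bound: "\<And>t. 1 \<le> t \<Longrightarrow> t \<le> T \<Longrightarrow> norm (v t) \<le> r"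
  shows "(1 / real T) * (\<Sum>t = 1..T. emp_risk f n S (w t + v t)) - emp_risk f n S wstar
           \<le> (norm (w 1 - wstar))\<^sup>2 / (\<eta> * real T) + 4 * \<beta> * (max (r - \<rho>) 0)\<^sup>2"
proof -
  define F where "F = emp_risk f n S"
  define \<delta> where "\<delta> = max (r - \<rho>) 0"
  have bpos: "\<beta> > 0"
  proof (rule ccontr)
    assume "\<not> \<beta> > 0"
    then have "1 / (4 * \<beta>) \<le> 0" by (simp add: divide_nonpos_nonneg)
    then show False using eta_pos eta_le by linarith
  qed
  have rhs0: "0 \<le> (norm (w 1 - wstar))\<^sup>2 / (\<eta> * real T) + 4 * \<beta> * \<delta>\<^sup>2"
    using bpos eta_pos by simp
  have Fz: "\<And>z. norm z \<le> \<rho> \<Longrightarrow> F (wstar + z) = 0"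
    unfolding F_def emp_risk_def using flat unfolding flat_min_def by simp
  have Fs: "F wstar = 0" using Fz[of 0] rho by simp
  show ?thesis
  proof (cases "n = 0")
    case True
    then show ?thesis using rhs0 unfolding \<delta>_def by (simp add: emp_risk_def)
  next
    case False
    then have npos: "n > 0" by simp
    have tan: "\<And>x y. F y \<ge> F x + grad F x \<bullet> (y - x)"
      unfolding F_def by (rule emp_tangent[where f=f, OF smooth convex])
    have Fnn: "\<And>x. F x \<ge> 0" unfolding F_def emp_risk_def using nonneg by (simp add: sum_nonneg)
    have gsq: "\<And>x. (norm (grad F x))\<^sup>2 \<le> 2 * \<beta> * F x"
      using grad_sq[where F=F, OF _ bpos Fnn] emp_smooth[where f=f and S=S, OF smooth npos] unfolding F_def by blast
    define D where "D = (\<lambda>t. (norm (w t - wstar))\<^sup>2)"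
    define E where "E = (\<lambda>t. (norm (w t - \<eta> *\<^sub>R grad F (w t + v t) - wstar))\<^sup>2)"
    have si: "\<And>t. 1 \<le> t \<Longrightarrow> t \<le> T \<Longrightarrow> E t \<le> D t - \<eta> * F (w t + v t) + 4 * \<beta> * \<eta> * \<delta>\<^sup>2"
      unfolding E_def D_def \<delta>_def
      by (rule step_ineq[OF tan gsq Fz bpos eta_pos eta_le rho]) (use v_bound in auto)
    have ind: "1 \<le> k \<Longrightarrow> k \<le> T \<Longrightarrow> \<eta> * (\<Sum>t = 1..k. F (w t + v t)) \<le> D 1 - E k + real k * (4 * \<beta> * \<eta> * \<delta>\<^sup>2)" for k
    proof (induction k)
      case 0
      then show ?case by simp
    next
      case (Suc k)
      show ?case
      proof (cases "k = 0")
        case True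
        then show ?thesis using si[of 1] Suc.prems by simp
      next
        case False
        have IH: "\<eta> * (\<Sum>t = 1..k. F (w t + v t)) \<le> D 1 - E k + real k * (4 * \<beta> * \<eta> * \<delta>\<^sup>2)"
          using Suc False by simp
        have "E k = D (Suc k)" unfolding E_def D_def using step[of k] Suc.prems False F_def by simp
        moreover have "E (Suc k) \<le> D (Suc k) - \<eta> * F (w (Suc k) + v (Suc k)) + 4 * \<beta> * \<eta> * \<delta>\<^sup>2"
          using si[of "Suc k"] Suc.prems by simp
        ultimately show ?thesis using IH by (simp add: distrib_left algebra_simps)
      qed
    qed
    have "\<eta> * (\<Sum>t = 1..T. F (w t + v t)) \<le> D 1 - E T + real T * (4 * \<beta> * \<eta> * \<delta>\<^sup>2)"
      using ind[OF T_pos order.refl] .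
    moreover have "E T \<ge> 0" unfolding E_def by simp
    ultimately have "\<eta> * (\<Sum>t = 1..T. F (w t + v t)) \<le> D 1 + real T * (4 * \<beta> * \<eta> * \<delta>\<^sup>2)" by linarith
    then have "(\<Sum>t = 1..T. F (w t + v t)) \<le> (D 1 + real T * (4 * \<beta> * \<eta> * \<delta>\<^sup>2)) / \<eta>"
      using eta_pos by (simp add: field_simps)
    then have "(1 / real T) * (\<Sum>t = 1..T. F (w t + v t)) \<le> (1 / real T) * ((D 1 + real T * (4 * \<beta> * \<eta> * \<delta>\<^sup>2)) / \<eta>)"
      by (rule mult_left_mono) simp_all
    also have "\<dots> = D 1 / (\<eta> * real T) + 4 * \<beta> * \<delta>\<^sup>2"
      using eta_pos T_pos by (simp add: field_simps)
    finally show ?thesis unfolding F_def[symmetric] D_def \<delta>_def[symmetric] using Fs by simp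
  qed
qed

end
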